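(* For any embedded rectangle $R=(B,A_1,A_2)$ with $B\subseteq EB^{-1}(1)$ we have $\alpha(R)\le 2^{-2m(R)}$.
   Context: $D$ is a finite domain. Two elements $x=(x_1,x_2)$, $y=(y_1,y_2)$ of $D\times D$ are bidistinct if $x_1\ne y_2$ and $x_2\ne y_1$. $EB:(D\times D)^n\to\{0,1\}$ equals $1$ iff for all $1\le i,j\le n$ the $i$-th and $j$-th pairs are bidistinct; inputs are viewed as functions $[1,n]\to D'$ with $D'=D\times D$. For $A\subseteq[1,n]$, a partial input on $A$ is a function $A\to D'$; for disjoint $A_1,A_2$ and partial inputs $\tau_1,\tau_2$ on them, $\tau_1\tau_2$ is the partial input on $A_1\cup A_2$ agreeing with each. For $B\subseteq D'^{[1,n]}$, $B_A$ is the set of partial inputs on $A$ that agree with some input in $B$. An embedded rectangle is a triple $R=(B,A_1,A_2)$ with $A_1,A_2\subseteq[1,n]$ disjoint and $B\subseteq D'^{[1,n]}$ such that (i) $B_{[1,n]\setminus(A_1\cup A_2)}$ consists of a single partial input $\sigma$ and (ii) whenever $\tau_1\in B_{A_1}$ and $\tau_2\in B_{A_2}$, $\tau_1\tau_2\sigma\in B$. Define $m_j(R)=|A_j|$, $m(R)=\min(m_1(R),m_2(R))$, $\alpha_j(R)=|B_{A_j}|/|D'|^{|A_j|}$, $\alpha(R)=\min(\alpha_1(R),\alpha_2(R))$. *)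

theory Defs
  imports Complex_Main "HOL-Library.FuncSet"
begin

text \<open>Domain D is a finite type 'd; D' = 'd \<times> 'd. Inputs are functions
  [1,n] \<rightarrow> D', represented as extensional functions in PiE; partial inputs on A
  are extensional functions on A.\<close>

definition bidistinct :: "'d \<times> 'd \<Rightarrow> 'd \<times> 'd \<Rightarrow> bool" where
  "bidistinct x y \<longleftrightarrow> fst x \<noteq> snd y \<and> snd x \<noteq> fst y"

definition inputs :: "nat \<Rightarrow> (nat \<Rightarrow> 'd \<times> 'd) set" where
  "inputs n = PiE {1..n} (\<lambda>_. UNIV)"

definition EB :: "nat \<Rightarrow> (nat \<Rightarrow> 'd \<times> 'd) \<Rightarrow> bool" where
  "EB n x \<longleftrightarrow> (\<forall>i\<in>{1..n}. \<forall>j\<in>{1..n}. bidistinct (x i) (x j))"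

definition proj :: "(nat \<Rightarrow> 'a) set \<Rightarrow> nat set \<Rightarrow> (nat \<Rightarrow> 'a) set" where
  "proj B A = (\<lambda>x. restrict x A) ` B"

definition glue :: "nat set \<Rightarrow> nat set \<Rightarrow> (nat \<Rightarrow> 'a) \<Rightarrow> (nat \<Rightarrow> 'a) \<Rightarrow> (nat \<Rightarrow> 'a) \<Rightarrow> nat \<Rightarrow> 'a" where
  "glue A1 A2 t1 t2 s = (\<lambda>i. if i \<in> A1 then t1 i else if i \<in> A2 then t2 i else s i)"

definition embedded_rectangle :: "nat \<Rightarrow> (nat \<Rightarrow> 'd \<times> 'd) set \<Rightarrow> nat set \<Rightarrow> nat set \<Rightarrow> bool" where
  "embedded_rectangle n B A1 A2 \<longleftrightarrow>
     B \<subseteq> inputs n \<and> A1 \<subseteq> {1..n} \<and> A2 \<subseteq> {1..n} \<and> A1 \<inter> A2 = {} \<and>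
     (\<exists>\<sigma>. proj B ({1..n} - (A1 \<union> A2)) = {\<sigma>}) \<and>
     (\<forall>t1\<in>proj B A1. \<forall>t2\<in>proj B A2. \<forall>\<sigma>\<in>proj B ({1..n} - (A1 \<union> A2)).
        glue A1 A2 t1 t2 \<sigma> \<in> B)"

definition alpha_j :: "(nat \<Rightarrow> 'd::finite \<times> 'd) set \<Rightarrow> nat set \<Rightarrow> real" where
  "alpha_j B A = real (card (proj B A)) / real (card (UNIV :: ('d \<times> 'd) set)) ^ card A"

definition alpha_R :: "(nat \<Rightarrow> 'd::finite \<times> 'd) set \<Rightarrow> nat set \<Rightarrow> nat set \<Rightarrow> real" where
  "alpha_R B A1 A2 = min (alpha_j B A1) (alpha_j B A2)"

definition m_R :: "nat set \<Rightarrow> nat set \<Rightarrow> nat" where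
  "m_R A1 A2 = min (card A1) (card A2)"

end

theory Submission
  imports Defs
begin

lemma alpha_bound:
  fixes B :: "(nat \<Rightarrow> 'd::finite \<times> 'd) set"
  assumes fA: "finite A" and S: "\<And>x i. x \<in> B \<Longrightarrow> i \<in> A \<Longrightarrow> x i \<in> S"
  shows "alpha_j B A \<le> (real (card S) / real (card (UNIV :: ('d \<times> 'd) set))) ^ card A"
proof -
  have sub: "proj B A \<subseteq> PiE A (\<lambda>_. S)"
    unfolding proj_def using S by auto
  have "card (proj B A) \<le> card (PiE A (\<lambda>_. S))"
    by (rule card_mono[OF _ sub]) (simp add: fA finite_PiE)
  also have "\<dots> = card S ^ card A" using fA by (simp add: card_PiE)
  finally have c: "real (card (proj B A)) \<le> real (card S) ^ card A"
    by (metis of_nat_le_iff of_nat_power)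
  have pos: "real (card (UNIV :: ('d \<times> 'd) set)) ^ card A > 0" by (simp add: finite_UNIV_card_ge_0)
  show ?thesis unfolding alpha_j_def power_divide
    using c pos by (simp add: divide_right_mono)
qed

lemma alpha_le1:
  fixes B :: "(nat \<Rightarrow> 'd::finite \<times> 'd) set"
  assumes fA: "finite A"
  shows "alpha_j B A \<le> 1"
proof -
  have "alpha_j B A \<le> (real (card (UNIV :: ('d \<times> 'd) set)) / real (card (UNIV :: ('d \<times> 'd) set))) ^ card A"
    by (rule alpha_bound[OF fA]) auto
  also have "\<dots> = 1" by simp
  finally show ?thesis .
qed

theorem lemma10:
  fixes n :: nat and B :: "(nat \<Rightarrow> 'd::finite \<times> 'd) set" and A1 A2 :: "nat set"
  assumes "embedded_rectangle n B A1 A2"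
    and "B \<subseteq> {x \<in> inputs n. EB n x}"
  shows "alpha_R B A1 A2 \<le> 2 powr (- 2 * real (m_R A1 A2))"
proof -
  note R = assms(1)[unfolded embedded_rectangle_def]
  obtain \<sigma> where sig: "proj B ({1..n} - (A1 \<union> A2)) = {\<sigma>}" using R by blast
  have fA1: "finite A1" and fA2: "finite A2" using R finite_subset by blast+
  have key: "bidistinct (x i) (y j)" if x: "x \<in> B" and y: "y \<in> B" and i: "i \<in> A1" and j: "j \<in> A2" for x y i j
  proof -
    let ?z = "glue A1 A2 (restrict x A1) (restrict y A2) \<sigma>"
    have "restrict x A1 \<in> proj B A1" "restrict y A2 \<in> proj B A2"
      using x y unfolding proj_def by auto
    hence zB: "?z \<in> B" using R sig by auto
    hence "EB n ?z" using assms(2) by auto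
    moreover have "i \<in> {1..n}" "j \<in> {1..n}" using R i j by auto
    ultimately have "bidistinct (?z i) (?z j)" unfolding EB_def by blast
    moreover have "?z i = x i" using i by (simp add: glue_def)
    moreover have "j \<notin> A1" using R j by auto
    hence "?z j = y j" using j by (simp add: glue_def)
    ultimately show ?thesis by simp
  qed
  define P where "P = {fst (x i) | x i. x \<in> B \<and> i \<in> A1}"
  define Q where "Q = {snd (x i) | x i. x \<in> B \<and> i \<in> A1}"
  define P' where "P' = {fst (x i) | x i. x \<in> B \<and> i \<in> A2}"
  define Q' where "Q' = {snd (x i) | x i. x \<in> B \<and> i \<in> A2}"
  define d where "d = real (card (UNIV :: 'd set))"
  have dpos: "d > 0" unfolding d_def by (simp add: finite_UNIV_card_ge_0)
  have cU: "real (card (UNIV :: ('d \<times> 'd) set)) = d^2"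
    unfolding d_def by (simp add: UNIV_Times_UNIV[symmetric] card_cartesian_product power2_eq_square del: UNIV_Times_UNIV)
  have d1: "P \<inter> Q' = {}" using key unfolding P_def Q'_def bidistinct_def by auto
  have d2: "Q \<inter> P' = {}" using key unfolding Q_def P'_def bidistinct_def by auto
  have e1: "real (card P) + real (card Q') \<le> d"
  proof -
    have "card P + card Q' = card (P \<union> Q')" using d1 by (simp add: card_Un_disjoint)
    also have "\<dots> \<le> card (UNIV :: 'd set)" by (rule card_mono) auto
    finally show ?thesis unfolding d_def by linarith
  qed
  have e2: "real (card Q) + real (card P') \<le> d"
  proof -
    have "card Q + card P' = card (Q \<union> P')" using d2 by (simp add: card_Un_disjoint)
    also have "\<dots> \<le> card (UNIV :: 'd set)" by (rule card_mono) auto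
    finally show ?thesis unfolding d_def by linarith
  qed
  define p where "p = real (card P)"
  define q where "q = real (card Q)"
  define p' where "p' = real (card P')"
  define q' where "q' = real (card Q')"
  have nn: "p \<ge> 0" "q \<ge> 0" "p' \<ge> 0" "q' \<ge> 0" unfolding p_def q_def p'_def q'_def by auto
  have pd: "p \<le> d" "q \<le> d" "p' \<le> d" "q' \<le> d" using e1 e2 nn unfolding p_def q_def p'_def q'_def by auto
  have pq1: "p + q' \<le> d" using e1 unfolding p_def q'_def .
  have pq2: "q + p' \<le> d" using e2 unfolding q_def p'_def .
  have m1: "4 * (p * q') \<le> d^2"
  proof -
    have s1: "(p + q')^2 \<le> d^2" using pq1 nn by (intro power_mono) auto
    have "(p + q')^2 - 4 * (p * q') = (p - q')^2" by (simp add: power2_eq_square algebra_simps)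
    moreover have "0 \<le> (p - q')^2" by simp
    ultimately show ?thesis using s1 by linarith
  qed
  have m2: "4 * (q * p') \<le> d^2"
  proof -
    have s1: "(q + p')^2 \<le> d^2" using pq2 nn by (intro power_mono) auto
    have "(q + p')^2 - 4 * (q * p') = (q - p')^2" by (simp add: power2_eq_square algebra_simps)
    moreover have "0 \<le> (q - p')^2" by simp
    ultimately show ?thesis using s1 by linarith
  qed
  define a where "a = p * q / d^2"
  define b where "b = p' * q' / d^2"
  have a0: "a \<ge> 0" "b \<ge> 0" unfolding a_def b_def using nn by auto
  have ab: "a * b \<le> 1/16"
  proof -
    have "16 * ((p*q') * (q*p')) \<le> d^2 * d^2"
      using mult_mono[OF m1 m2] nn by (simp add: mult_ac)
    moreover have "a * b = ((p*q')*(q*p')) / (d^2*d^2)" unfolding a_def b_def by (simp add: mult_ac)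
    moreover have D: "d^2 * d^2 > 0" using dpos by simp
    ultimately have "a * b \<le> (d^2*d^2/16) / (d^2*d^2)"
      by (simp add: divide_right_mono)
    also have "\<dots> = 1/16" using D by simp
    finally show ?thesis .
  qed
  have pqd: "p * q \<le> d^2" "p' * q' \<le> d^2" using pd nn
    by (auto simp: power2_eq_square intro!: mult_mono)
  have a1: "a \<le> 1" "b \<le> 1" unfolding a_def b_def using pqd dpos
    by (auto simp: divide_le_eq_1)
  have cPQ: "real (card (P \<times> Q)) = p * q" unfolding p_def q_def by (simp add: card_cartesian_product)
  have cPQ': "real (card (P' \<times> Q')) = p' * q'" unfolding p'_def q'_def by (simp add: card_cartesian_product)
  have al1: "alpha_j B A1 \<le> a ^ card A1"
  proof -
    have "alpha_j B A1 \<le> (real (card (P \<times> Q)) / real (card (UNIV :: ('d \<times> 'd) set))) ^ card A1"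
      by (rule alpha_bound[OF fA1]) (force simp: P_def Q_def mem_Times_iff)
    thus ?thesis using cPQ cU unfolding a_def by simp
  qed
  have al2: "alpha_j B A2 \<le> b ^ card A2"
  proof -
    have "alpha_j B A2 \<le> (real (card (P' \<times> Q')) / real (card (UNIV :: ('d \<times> 'd) set))) ^ card A2"
      by (rule alpha_bound[OF fA2]) (force simp: P'_def Q'_def mem_Times_iff)
    thus ?thesis using cPQ' cU unfolding b_def by simp
  qed
  define m where "m = m_R A1 A2"
  have "a ^ card A1 \<le> a ^ m" unfolding m_def m_R_def
    using a0 a1 by (intro power_decreasing) auto
  have "b ^ card A2 \<le> b ^ m" unfolding m_def m_R_def
    using a0 a1 by (intro power_decreasing) auto
  have minab: "min a b \<le> 1/4"
  proof (rule ccontr)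
    assume "\<not> ?thesis"
    hence "a > 1/4" "b > 1/4" by auto
    hence "a * b > 1/4 * (1/4)" by (intro mult_strict_mono) auto
    thus False using ab by simp
  qed
  have "alpha_R B A1 A2 \<le> min (a ^ m) (b ^ m)"
    unfolding alpha_R_def using al1 al2 \<open>a ^ card A1 \<le> a ^ m\<close> \<open>b ^ card A2 \<le> b ^ m\<close> by linarith
  also have "min (a ^ m) (b ^ m) \<le> (1/4) ^ m"
  proof (cases "a \<le> b")
    case True
    hence "a \<le> 1/4" using minab by simp
    thus ?thesis using a0 by (simp add: power_mono min.coboundedI1)
  next
    case False
    hence "b \<le> 1/4" using minab by simp
    thus ?thesis using a0 by (simp add: power_mono min.coboundedI2)
  qed
  also have "(1/4::real) ^ m = 2 powr (- 2 * real m)"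
  proof -
    have "(2::real) powr (- 2 * real m) = 2 powr (2 * (- real m))" by simp
    also have "\<dots> = (2 powr 2) powr (- real m)" by (simp only: powr_powr)
    also have "(2::real) powr 2 = 4" by simp
    finally have "(2::real) powr (- 2 * real m) = 4 powr (- real m)" .
    also have "\<dots> = inverse (4 ^ m)" by (simp add: powr_minus powr_realpow)
    finally show ?thesis by (simp add: power_one_over field_simps)
  qed
  finally show ?thesis unfolding m_def .
qed

end
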